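(* Let $G=(V,A)$, $\mathfrak n=\mathfrak n(G)$ and $\delta$ be as below, with $\delta(e_i)=\sum_{\alpha\in A}\lambda_{i,\alpha}e_i\wedge\alpha+\omega_i$. Let $e_{i_0}\in V$ and $\alpha\in A$. Suppose there are vertices $e_{i_0},e_{i_1},\dots,e_{i_{N-1}}$ and edges $\beta_0,\dots,\beta_{N-1}$ such that $\beta_k$ joins $e_{i_k}$ and $e_{i_{k+1}}$ (indices mod $N$, so $\beta_{N-1}$ joins $e_{i_{N-1}}$ and $e_{i_0}$) and $\beta_k\ne\alpha$ for all $k$. Then $\lambda_{i_0,\alpha}=(-1)^N\lambda_{i_0,\alpha}$; in particular, if $N$ is odd then $\lambda_{i_0,\alpha}=0$.
   Context: $G=(V,A)$ is a finite simple graph without loops and without isolated vertices, $V=\{e_1,\dots,e_n\}$ ordered, each edge joining $e_i,e_j$ ($i<j$) oriented from $e_i$ to $e_j$. $\mathfrak n(G)$ over a field of characteristic zero has basis $V\cup A$, $[e_i,e_j]=\alpha$ if $\alpha$ goes from $e_i$ to $e_j$, $[e_i,e_j]=0$ if not adjacent, edges central; $\mathfrak z=\mathrm{span}(A)$. $\delta$ is a Lie bialgebra structure on $\mathfrak n$ (linear $\delta:\mathfrak n\to\Lambda^2\mathfrak n$ satisfying co-Jacobi and $\delta[x,y]=[\delta x,y]+[x,\delta y]$) with $\delta(\mathfrak z)=0$, such that for every vertex $e_i$ one has $\delta(e_i)=\sum_{\alpha\in A}\lambda_{i,\alpha}e_i\wedge\alpha+\omega_i$ with scalars $\lambda_{i,\alpha}$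 and $\omega_i\in\Lambda^2\mathfrak z$. *)

theory Defs
  imports Main
begin

text \<open>Basis of n(G): vertices e_i (indexed 0..n-1, ordered by index) and edges.
  An edge is a pair (i,j) with i < j, oriented from e_i to e_j.\<close>
datatype bas = Vx nat | Ed "nat \<times> nat"

definition basis_set :: "nat \<Rightarrow> (nat \<times> nat) set \<Rightarrow> bas set" where
  "basis_set n A = Vx ` {..<n} \<union> Ed ` A"

definition simple_graph_noiso :: "nat \<Rightarrow> (nat \<times> nat) set \<Rightarrow> bool" where
  "simple_graph_noiso n A \<longleftrightarrow>
     (\<forall>(i,j)\<in>A. i < j \<and> j < n) \<and>
     (\<forall>i<n. \<exists>(a,b)\<in>A. i = a \<or> i = b)"

definition in_n :: "nat \<Rightarrow> (nat \<times> nat) set \<Rightarrow> (bas \<Rightarrow> 'k::field) \<Rightarrow> bool" where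
  "in_n n A x \<longleftrightarrow> (\<forall>b. b \<notin> basis_set n A \<longrightarrow> x b = 0)"

definition unitv :: "bas \<Rightarrow> bas \<Rightarrow> 'k::field" where
  "unitv e = (\<lambda>b. if b = e then 1 else 0)"

definition br :: "(nat \<times> nat) set \<Rightarrow> (bas \<Rightarrow> 'k::field) \<Rightarrow> (bas \<Rightarrow> 'k) \<Rightarrow> bas \<Rightarrow> 'k" where
  "br A x y = (\<lambda>b. case b of
      Vx _ \<Rightarrow> 0
    | Ed (i,j) \<Rightarrow> (if (i,j) \<in> A then x (Vx i) * y (Vx j) - x (Vx j) * y (Vx i) else 0))"

text \<open>Lambda^2 n is realised as antisymmetric 2-tensors t a b (coefficients w.r.t. basis pairs);
  x \<wedge> y = x \<otimes> y - y \<otimes> x.\<close>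
definition wedge :: "(bas \<Rightarrow> 'k::field) \<Rightarrow> (bas \<Rightarrow> 'k) \<Rightarrow> bas \<Rightarrow> bas \<Rightarrow> 'k" where
  "wedge x y = (\<lambda>a b. x a * y b - x b * y a)"

definition delta :: "nat \<Rightarrow> (nat \<times> nat) set \<Rightarrow> (bas \<Rightarrow> bas \<Rightarrow> bas \<Rightarrow> 'k::field)
    \<Rightarrow> (bas \<Rightarrow> 'k) \<Rightarrow> bas \<Rightarrow> bas \<Rightarrow> 'k" where
  "delta n A D x = (\<lambda>a b. \<Sum>e\<in>basis_set n A. x e * D e a b)"

text \<open>Adjoint action of x on 2-tensors: x.(u\<otimes>v) = [x,u]\<otimes>v + u\<otimes>[x,v].\<close>
definition act2 :: "nat \<Rightarrow> (nat \<times> nat) set \<Rightarrow> (bas \<Rightarrow> 'k::field) \<Rightarrow> (bas \<Rightarrow> bas \<Rightarrow> 'k)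
    \<Rightarrow> bas \<Rightarrow> bas \<Rightarrow> 'k" where
  "act2 n A x t = (\<lambda>a b. (\<Sum>c\<in>basis_set n A. br A x (unitv c) a * t c b)
                        + (\<Sum>c\<in>basis_set n A. br A x (unitv c) b * t a c))"

definition delta_id_delta :: "nat \<Rightarrow> (nat \<times> nat) set \<Rightarrow> (bas \<Rightarrow> bas \<Rightarrow> bas \<Rightarrow> 'k::field)
    \<Rightarrow> (bas \<Rightarrow> 'k) \<Rightarrow> bas \<Rightarrow> bas \<Rightarrow> bas \<Rightarrow> 'k" where
  "delta_id_delta n A D x = (\<lambda>a b c. \<Sum>d\<in>basis_set n A. delta n A D x d c * D d a b)"

text \<open>Lie bialgebra structure on n(G): delta maps into Lambda^2 n, satisfies co-Jacobi
  (cyclic sum of (delta \<otimes> id) delta vanishes) and the 1-cocycle condition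
  delta [x,y] = x.delta y - y.delta x  (= [delta x, y] + [x, delta y]).\<close>
definition lie_bialgebra :: "nat \<Rightarrow> (nat \<times> nat) set \<Rightarrow> (bas \<Rightarrow> bas \<Rightarrow> bas \<Rightarrow> 'k::field) \<Rightarrow> bool" where
  "lie_bialgebra n A D \<longleftrightarrow>
     (\<forall>e\<in>basis_set n A. (\<forall>a b. D e a b = - D e b a) \<and>
        (\<forall>a b. a \<notin> basis_set n A \<or> b \<notin> basis_set n A \<longrightarrow> D e a b = 0)) \<and>
     (\<forall>x. in_n n A x \<longrightarrow> (\<forall>a b c. delta_id_delta n A D x a b c + delta_id_delta n A D x b c a
                                   + delta_id_delta n A D x c a b = 0)) \<and>
     (\<forall>x y. in_n n A x \<longrightarrow> in_n n A y \<longrightarrow>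
        delta n A D (br A x y) = (\<lambda>a b. act2 n A x (delta n A D y) a b - act2 n A y (delta n A D x) a b))"

definition in_L2z :: "(nat \<times> nat) set \<Rightarrow> (bas \<Rightarrow> bas \<Rightarrow> 'k::field) \<Rightarrow> bool" where
  "in_L2z A w \<longleftrightarrow> (\<forall>a b. w a b = - w b a) \<and> (\<forall>a b. a \<notin> Ed ` A \<or> b \<notin> Ed ` A \<longrightarrow> w a b = 0)"

end

theory Submission imports Defs begin

lemma fin_basis: assumes "simple_graph_noiso n A" shows "finite (basis_set n A)"
proof -
  have "A \<subseteq> {..<n} \<times> {..<n}" using assms unfolding simple_graph_noiso_def by fastforce
  hence "finite A" by (meson finite_SigmaI finite_lessThan finite_subset)
  thus ?thesis unfolding basis_set_def by simp
qed

lemma ind_mult: "(if c = e then 1 else 0) * (x::'k::field) = (if c = e then x else 0)" by simp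

lemma delta_unit: assumes "finite (basis_set n A)" "e \<in> basis_set n A"
  shows "delta n A D (unitv e) = D e"
  unfolding delta_def unitv_def using assms
  by (simp add: ind_mult)

lemma br_sum: assumes "finite (basis_set n A)" "p < n" "q < n"
  shows "(\<Sum>c\<in>basis_set n A. br A (unitv (Vx i)) (unitv c) (Ed (p,q)) * f c)
     = (if (p,q) \<in> A then (if i = p then f (Vx q) else 0) - (if i = q then f (Vx p) else 0) else (0::'k::field))"
proof -
  have m: "Vx p \<in> basis_set n A" "Vx q \<in> basis_set n A" using assms by (auto simp: basis_set_def)
  have "(\<Sum>c\<in>basis_set n A. br A (unitv (Vx i)) (unitv c) (Ed (p,q)) * f c)
     = (\<Sum>c\<in>basis_set n A. (if (p,q) \<in> A then (if i = p then (if c = Vx q then f c else 0) else 0) - (if i = q then (if c = Vx p then f c else 0) else 0) else 0))"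
    by (rule sum.cong) (auto simp: br_def unitv_def)
  also have "\<dots> = (if (p,q) \<in> A then (if i = p then f (Vx q) else 0) - (if i = q then f (Vx p) else 0) else 0)" 
    using assms(1) m by (cases "(p,q) \<in> A"; cases "i = p"; cases "i = q") (simp_all add: sum_subtractf sum_negf)
  finally show ?thesis .
qed

lemma finA: assumes "simple_graph_noiso n A" shows "finite A"
proof -
  have "A \<subseteq> {..<n} \<times> {..<n}" using assms unfolding simple_graph_noiso_def by fastforce
  thus "finite A" by (meson finite_SigmaI finite_lessThan finite_subset)
qed

lemma D_vals:
  fixes D :: "bas \<Rightarrow> bas \<Rightarrow> bas \<Rightarrow> 'k::field"
  assumes vert: "\<forall>i<n. D (Vx i) = (\<lambda>a b. (\<Sum>\<gamma>\<in>A. lam i \<gamma> * wedge (unitv (Vx i)) (unitv (Ed \<gamma>)) a b) + om i a b)"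
    and omz: "\<forall>i<n. in_L2z A (om i)" and j: "j < n" and g: "\<gamma> \<in> A" and fin: "finite A"
  shows "D (Vx j) (Vx q) (Ed \<gamma>) = (if q = j then lam j \<gamma> else 0)"
    and "D (Vx j) (Ed \<gamma>) (Vx q) = (if q = j then - lam j \<gamma> else 0)"
proof -
  have o1: "om j (Vx q) (Ed \<gamma>) = 0" "om j (Ed \<gamma>) (Vx q) = 0"
  proof -
    have z: "\<And>a b. a \<notin> Ed ` A \<or> b \<notin> Ed ` A \<Longrightarrow> om j a b = 0" using omz j unfolding in_L2z_def by blast
    have "Vx q \<notin> Ed ` A" by auto
    thus "om j (Vx q) (Ed \<gamma>) = 0" "om j (Ed \<gamma>) (Vx q) = 0" using z by auto
  qed
  have vj: "\<And>a b. D (Vx j) a b = (\<Sum>\<gamma>\<in>A. lam j \<gamma> * wedge (unitv (Vx j)) (unitv (Ed \<gamma>)) a b) + om j a b"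
    using vert j by simp
  have "D (Vx j) (Vx q) (Ed \<gamma>) = (\<Sum>\<gamma>'\<in>A. (if q = j \<and> \<gamma>' = \<gamma> then lam j \<gamma>' else 0))"
    unfolding vj o1 by (auto simp: wedge_def unitv_def intro!: sum.cong)
  also have "\<dots> = (if q = j then lam j \<gamma> else 0)" using fin g by (cases "q = j") (auto simp: sum.delta')
  finally show "D (Vx j) (Vx q) (Ed \<gamma>) = (if q = j then lam j \<gamma> else 0)" .
  have "D (Vx j) (Ed \<gamma>) (Vx q) = (\<Sum>\<gamma>'\<in>A. (if q = j \<and> \<gamma>' = \<gamma> then - lam j \<gamma>' else 0))"
    unfolding vj o1 by (auto simp: wedge_def unitv_def intro!: sum.cong)
  also have "\<dots> = (if q = j then - lam j \<gamma> else 0)" using fin g by (cases "q = j") (auto simp: sum.delta')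
  finally show "D (Vx j) (Ed \<gamma>) (Vx q) = (if q = j then - lam j \<gamma> else 0)" .
qed
lemma key:
  fixes D :: "bas \<Rightarrow> bas \<Rightarrow> bas \<Rightarrow> 'k::field"
  assumes graph: "simple_graph_noiso n A"
    and bialg: "lie_bialgebra n A D"
    and center: "\<forall>\<gamma>\<in>A. D (Ed \<gamma>) = (\<lambda>a b. 0)"
    and vert: "\<forall>i<n. D (Vx i) = (\<lambda>a b. (\<Sum>\<gamma>\<in>A. lam i \<gamma> * wedge (unitv (Vx i)) (unitv (Ed \<gamma>)) a b) + om i a b)"
    and omz: "\<forall>i<n. in_L2z A (om i)"
    and pq: "(p,q) \<in> A" and al: "\<alpha> \<in> A" and ne: "\<alpha> \<noteq> (p,q)"
  shows "lam q \<alpha> = - lam p \<alpha>"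
proof -
  have fin: "finite A" using finA[OF graph] .
  have finb: "finite (basis_set n A)" using fin_basis[OF graph] .
  have ord: "\<And>a b. (a,b) \<in> A \<Longrightarrow> a < b \<and> b < n" using graph unfolding simple_graph_noiso_def by auto
  obtain r s where rs: "\<alpha> = (r,s)" by (cases \<alpha>)
  have pqn: "p < q" "q < n" "p < n" using ord[OF pq] by auto
  have rsn: "r < s" "s < n" "r < n" using ord[of r s] al rs by auto
  have inb: "\<And>i. i < n \<Longrightarrow> Vx i \<in> basis_set n A" by (auto simp: basis_set_def)
  have inn: "\<And>i. i < n \<Longrightarrow> in_n n A (unitv (Vx i) :: bas \<Rightarrow> 'k)"
    unfolding in_n_def unitv_def using inb by auto
  have brpq: "br A (unitv (Vx p)) (unitv (Vx q)) = (unitv (Ed (p,q)) :: bas \<Rightarrow> 'k)"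
  proof
    fix b show "br A (unitv (Vx p)) (unitv (Vx q)) b = (unitv (Ed (p,q)) :: bas \<Rightarrow> 'k) b"
      using ord[of q p] pqn pq by (cases b) (auto simp: br_def unitv_def split: prod.splits)
  qed
  have cocyc: "delta n A D (br A (unitv (Vx p)) (unitv (Vx q))) =
     (\<lambda>a b. act2 n A (unitv (Vx p)) (delta n A D (unitv (Vx q))) a b - act2 n A (unitv (Vx q)) (delta n A D (unitv (Vx p))) a b)"
    using bialg inn pqn unfolding lie_bialgebra_def by blast
  have edb: "Ed (p,q) \<in> basis_set n A" using pq by (auto simp: basis_set_def)
  have lhs: "delta n A D (br A (unitv (Vx p)) (unitv (Vx q))) = (\<lambda>a b. 0)"
    unfolding brpq delta_unit[OF finb edb] using center pq by simp
  have dq: "delta n A D (unitv (Vx q)) = D (Vx q)" and dp: "delta n A D (unitv (Vx p)) = D (Vx p)"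
    by (rule delta_unit[OF finb inb[OF pqn(2)]], rule delta_unit[OF finb inb[OF pqn(3)]])
  note Dv = D_vals[OF vert omz _ _ fin]
  have a1: "act2 n A (unitv (Vx p)) (D (Vx q)) (Ed (p,q)) (Ed (r,s)) = lam q \<alpha>"
    unfolding act2_def br_sum[OF finb pqn(3) pqn(2)] br_sum[OF finb rsn(3) rsn(2)]
    using pq al rs ne pqn rsn Dv[of q] by auto
  have a2: "act2 n A (unitv (Vx q)) (D (Vx p)) (Ed (p,q)) (Ed (r,s)) = - lam p \<alpha>"
    unfolding act2_def br_sum[OF finb pqn(3) pqn(2)] br_sum[OF finb rsn(3) rsn(2)]
    using pq al rs ne pqn rsn Dv[of p] by auto
  have "0 = lam q \<alpha> - (- lam p \<alpha>)"
    using fun_cong[OF fun_cong[OF cocyc, of "Ed (p,q)"], of "Ed (r,s)"] lhs a1 a2 dp dq by simp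
  thus ?thesis by (simp add: algebra_simps eq_neg_iff_add_eq_0)
qed
theorem mainTheorem16:
  fixes n :: nat and A :: "(nat \<times> nat) set"
    and D :: "bas \<Rightarrow> bas \<Rightarrow> bas \<Rightarrow> 'k::field_char_0"
    and lam :: "nat \<Rightarrow> nat \<times> nat \<Rightarrow> 'k" and om :: "nat \<Rightarrow> bas \<Rightarrow> bas \<Rightarrow> 'k"
    and i0 :: nat and \<alpha> :: "nat \<times> nat" and N :: nat
    and iv :: "nat \<Rightarrow> nat" and \<beta> :: "nat \<Rightarrow> nat \<times> nat"
  assumes graph: "simple_graph_noiso n A"
    and bialg: "lie_bialgebra n A D"
    and center: "\<forall>\<gamma>\<in>A. D (Ed \<gamma>) = (\<lambda>a b. 0)"
    and vert: "\<forall>i<n. D (Vx i) = (\<lambda>a b. (\<Sum>\<gamma>\<in>A. lam i \<gamma> * wedge (unitv (Vx i)) (unitv (Ed \<gamma>)) a b) + om i a b)"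
    and omz: "\<forall>i<n. in_L2z A (om i)"
    and i0: "i0 < n" and alpha: "\<alpha> \<in> A"
    and Npos: "0 < N"
    and start: "iv 0 = i0"
    and verts: "\<forall>k<N. iv k < n"
    and edges: "\<forall>k<N. \<beta> k \<in> A \<and> \<beta> k \<noteq> \<alpha> \<and>
                  (\<beta> k = (iv k, iv (Suc k mod N)) \<or> \<beta> k = (iv (Suc k mod N), iv k))"
  shows "lam i0 \<alpha> = (-1) ^ N * lam i0 \<alpha> \<and> (odd N \<longrightarrow> lam i0 \<alpha> = 0)"
proof -
  have step: "lam (iv (Suc k mod N)) \<alpha> = - lam (iv k) \<alpha>" if k: "k < N" for k
  proof -
    have e: "\<beta> k \<in> A" "\<beta> k \<noteq> \<alpha>" "\<beta> k = (iv k, iv (Suc k mod N)) \<or> \<beta> k = (iv (Suc k mod N), iv k)"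
      using edges k by auto
    show ?thesis
    proof (cases "\<beta> k = (iv k, iv (Suc k mod N))")
      case True
      show ?thesis using key[OF graph bialg center vert omz, of "iv k" "iv (Suc k mod N)" \<alpha>] e True alpha by simp
    next
      case False
      hence b: "\<beta> k = (iv (Suc k mod N), iv k)" using e by simp
      have "lam (iv k) \<alpha> = - lam (iv (Suc k mod N)) \<alpha>"
        using key[OF graph bialg center vert omz, of "iv (Suc k mod N)" "iv k" \<alpha>] e b alpha by simp
      thus ?thesis by simp
    qed
  qed
  have pw: "k < N \<Longrightarrow> lam (iv k) \<alpha> = (-1)^k * lam i0 \<alpha>" for k
  proof (induction k)
    case 0 then show ?case using start by simp
  next
    case (Suc k)
    hence "Suc k mod N = Suc k" by simp
    hence "lam (iv (Suc k)) \<alpha> = - lam (iv k) \<alpha>" using step[of k] Suc.prems by simp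
    thus ?case using Suc by simp
  qed
  obtain m where m: "N = Suc m" using Npos by (cases N) auto
  have "lam (iv (Suc m mod N)) \<alpha> = - lam (iv m) \<alpha>" using step[of m] m by simp
  hence eq: "lam i0 \<alpha> = (-1) ^ N * lam i0 \<alpha>" using pw[of m] m start by simp
  moreover have "odd N \<longrightarrow> lam i0 \<alpha> = 0"
  proof
    assume "odd N"
    hence "lam i0 \<alpha> = - lam i0 \<alpha>" using eq by simp
    thus "lam i0 \<alpha> = 0" by simp
  qed
  ultimately show ?thesis by blast
qed

end
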